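(* Let $d\ge2$ and suppose that $t\in\left(\frac1{e\,\mu_{d-1}},\frac1{\mu_d}\right)$. Define $\xi_t=|\log(\mu_{d-1}t)|$ (with $\mu_1=1$). For $N\ge1$ let $G_N(a,t)=\sum_{n=0}^N A_n^+(a)t^n$, regarded as a polynomial of degree $N$ in $a$, and for $\rho\in(0,1)$ let $\nu_N(\rho)$ be the number of its $a$-plane zeros (Yang-Lee zeros, with multiplicity) in the annulus $1-\rho\le|a|\le\frac1{1-\rho}$. If $\xi_t<\rho<1$, then \[ 0<1-\frac1\rho\xi_t\le\liminf_{N\to\infty}\frac1N\nu_N(\rho)\le\limsup_{N\to\infty}\frac1N\nu_N(\rho)\le1, \] and a positive fraction of Yang-Lee zeros of $G_N(a,t)$ are in the annulus $1-\rho<|a|<\frac1{1-\rho}$ in the complex $a$-plane.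
   Context: Let $\mathbb{L}^d_+$ be the half-lattice of the $d$-dimensional hypercubic lattice (vertices with last coordinate $\ge0$). A positive walk is a self-avoiding walk in $\mathbb{L}^d_+$ starting at the origin; its visits are its vertices other than the origin with last coordinate $0$. $c_n^+(v)$ is the number of positive walks of length $n$ with $v$ visits and $A_n^+(a)=\sum_{v=0}^n c_n^+(v)a^v$. $\mu_d$ and $\mu_{d-1}$ are the growth constants of self-avoiding walks in $d$ and $d-1$ dimensions, with the convention $\mu_1=1$. *)

theory Defs
  imports Complex_Main "HOL-Computational_Algebra.Polynomial" "HOL-Library.Extended_Real"
    "HOL-Library.Liminf_Limsup"
begin

text \<open>Vertices of the hypercubic lattice Z^d are integer lists of length d.
  The last coordinate is the entry with index d - 1.\<close>

definition origin :: "nat \<Rightarrow> int list" where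
  "origin d = replicate d 0"

definition lattice_adj :: "nat \<Rightarrow> int list \<Rightarrow> int list \<Rightarrow> bool" where
  "lattice_adj d x y \<longleftrightarrow> length x = d \<and> length y = d \<and>
     (\<Sum>i<d. \<bar>x ! i - y ! i\<bar>) = 1"

definition saw :: "nat \<Rightarrow> nat \<Rightarrow> int list list set" where
  "saw d n = {w. length w = Suc n \<and> w ! 0 = origin d \<and> distinct w \<and>
                 (\<forall>i<n. lattice_adj d (w ! i) (w ! Suc i))}"

definition mu :: "nat \<Rightarrow> real" where
  "mu d = (if d = 1 then 1 else lim (\<lambda>n. root n (real (card (saw d n)))))"

definition pos_walk :: "nat \<Rightarrow> nat \<Rightarrow> int list list set" where
  "pos_walk d n = {w \<in> saw d n. \<forall>i\<le>n. (w ! i) ! (d - 1) \<ge> 0}"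

definition visits :: "nat \<Rightarrow> int list list \<Rightarrow> nat" where
  "visits d w = card {i. i < length w \<and> w ! i \<noteq> origin d \<and> (w ! i) ! (d - 1) = 0}"

definition cplus :: "nat \<Rightarrow> nat \<Rightarrow> nat \<Rightarrow> nat" where
  "cplus d n v = card {w \<in> pos_walk d n. visits d w = v}"

definition A_poly :: "nat \<Rightarrow> nat \<Rightarrow> complex poly" where
  "A_poly d n = (\<Sum>v\<le>n. monom (of_nat (cplus d n v)) v)"

definition G_poly :: "nat \<Rightarrow> real \<Rightarrow> nat \<Rightarrow> complex poly" where
  "G_poly d t N = (\<Sum>n\<le>N. smult (complex_of_real (t ^ n)) (A_poly d n))"

definition nu :: "nat \<Rightarrow> real \<Rightarrow> nat \<Rightarrow> real \<Rightarrow> nat" where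
  "nu d t N \<rho> = (\<Sum>z\<in>{z. poly (G_poly d t N) z = 0 \<and>
       1 - \<rho> \<le> cmod z \<and> cmod z \<le> 1 / (1 - \<rho>)}. order z (G_poly d t N))"

definition nu_open :: "nat \<Rightarrow> real \<Rightarrow> nat \<Rightarrow> real \<Rightarrow> nat" where
  "nu_open d t N \<rho> = (\<Sum>z\<in>{z. poly (G_poly d t N) z = 0 \<and>
       1 - \<rho> < cmod z \<and> cmod z < 1 / (1 - \<rho>)}. order z (G_poly d t N))"

end

theory Submission
  imports Defs "HOL-Computational_Algebra.Fundamental_Theorem_Algebra"
begin


lemma subadd_mult:
  fixes a :: "nat \<Rightarrow> real"
  assumes sub: "\<And>m n. a (m+n) \<le> a m + a n"
  shows "a (q*m + r) \<le> real q * a m + a r"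
proof (induction q)
  case 0 then show ?case by simp
next
  case (Suc q)
  have "a (Suc q * m + r) = a (m + (q*m + r))" by (simp add: algebra_simps)
  also have "\<dots> \<le> a m + a (q*m+r)" by (rule sub)
  also have "\<dots> \<le> a m + (real q * a m + a r)" using Suc by simp
  finally show ?case by (simp add: algebra_simps)
qed

lemma fekete:
  fixes a :: "nat \<Rightarrow> real"
  assumes sub: "\<And>m n. a (m+n) \<le> a m + a n" and pos: "\<And>n. a n \<ge> 0"
  defines "L \<equiv> (INF n\<in>{1..}. a n / real n)"
  shows "(\<lambda>n. a n / real n) \<longlonglongrightarrow> L"
proof -
  have bdd: "bdd_below ((\<lambda>n. a n / real n) ` {1..})"
    by (rule bdd_belowI[of _ 0]) (auto intro: divide_nonneg_nonneg pos)
  have low: "L \<le> a n / real n" if "n \<ge> 1" for n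
    unfolding L_def using that bdd by (intro cINF_lower) auto
  show ?thesis
  proof (rule LIMSEQ_I)
    fix e :: real assume e: "e > 0"
    have "L < L + e/2" using e by simp
    then obtain m where m: "m \<ge> 1" "a m / real m < L + e/2"
      unfolding L_def using bdd by (subst (asm) cINF_less_iff) auto
    define A where "A = Max (a ` {..<m})"
    have A: "a r \<le> A" if "r < m" for r
      unfolding A_def using that by (intro Max_ge) auto
    have A0: "A \<ge> 0" using A[of 0] pos[of 0] m by linarith
    obtain N :: nat where N: "N \<ge> 1" "A / real N < e/2"
    proof -
      obtain N where "real N > 2*A/e" using reals_Archimedean2 by blast
      then have "A / real (N+1) < e/2" using e A0
        by (simp add: divide_simps) (smt (verit, ccfv_SIG) mult.commute mult_left_mono of_nat_0_le_iff)
      then show ?thesis using that[of "N+1"] by simp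
    qed
    show "\<exists>no. \<forall>n\<ge>no. norm (a n / real n - L) < e"
    proof (intro exI allI impI)
      fix n assume n: "n \<ge> N"
      have n1: "n \<ge> 1" using N n by simp
      define q where "q = n div m"
      define r where "r = n mod m"
      have nqr: "n = q*m + r" unfolding q_def r_def by simp
      have rm: "r < m" unfolding r_def using m by simp
      have "a n \<le> real q * a m + a r" using subadd_mult[of a q m r, OF sub] nqr by simp
      also have "\<dots> \<le> real q * a m + A" using A[OF rm] by simp
      finally have an: "a n \<le> real q * a m + A" .
      have qm: "real q * real m \<le> real n" using nqr by (simp flip: of_nat_mult)
      have "a n / real n \<le> (real q * a m) / real n + A / real n"
        using an n1 by (simp add: divide_simps)
      also have "(real q * a m) / real n \<le> a m / real m"
      proof -
        have "real q * a m * real m \<le> a m * real n"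
          using qm pos[of m] by (metis mult.assoc mult.commute mult_left_mono)
        then show ?thesis using n1 m by (simp add: divide_simps)
      qed
      also have "A / real n \<le> A / real N" using A0 n N by (intro divide_left_mono) auto
      finally have "a n / real n < L + e" using m N by linarith
      moreover have "L \<le> a n / real n" using low n1 .
      ultimately show "norm (a n / real n - L) < e" by simp
    qed
  qed
qed



definition nsq :: "nat \<Rightarrow> complex poly \<Rightarrow> real" where
  "nsq M p = (\<Sum>k\<le>M. (cmod (coeff p k))\<^sup>2)"

lemma nsq_pCons0:
  assumes "degree f < M"
  shows "nsq M (pCons 0 f) = nsq M f"
proof -
  obtain M' where M': "M = Suc M'" using assms by (cases M) auto
  have "nsq M (pCons 0 f) = (\<Sum>k\<le>M'. (cmod (coeff f k))\<^sup>2)"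
    unfolding nsq_def M' by (subst sum.atMost_Suc_shift) simp
  also have "\<dots> = nsq M f"
    unfolding nsq_def M' using assms M' by (simp add: coeff_eq_0)
  finally show ?thesis .
qed

lemma cmod_sq_identity:
  fixes a x y :: complex
  shows "(cmod (- a * x + y))\<^sup>2 - (cmod (- x + cnj a * y))\<^sup>2
         = ((cmod a)\<^sup>2 - 1) * ((cmod x)\<^sup>2 - (cmod y)\<^sup>2)"
proof -
  have "complex_of_real ((cmod (- a * x + y))\<^sup>2 - (cmod (- x + cnj a * y))\<^sup>2)
      = complex_of_real (((cmod a)\<^sup>2 - 1) * ((cmod x)\<^sup>2 - (cmod y)\<^sup>2))"
    by (simp only: of_real_diff of_real_mult of_real_1 complex_norm_square complex_cnj_add
        complex_cnj_mult complex_cnj_minus complex_cnj_cnj) (simp add: algebra_simps)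
  then show ?thesis by (simp only: of_real_eq_iff)
qed

lemma nsq_swap:
  assumes "degree f < M"
  shows "nsq M ([:-a, 1:] * f) = nsq M ([:-1, cnj a:] * f)"
proof -
  have c1: "coeff ([:-a, 1:] * f) k = - a * coeff f k + coeff (pCons 0 f) k" for k
    by (simp add: mult_pCons_left)
  have c2: "coeff ([:-1, cnj a:] * f) k = - coeff f k + cnj a * coeff (pCons 0 f) k" for k
    by (cases k) (simp_all add: mult_pCons_left)
  have "nsq M ([:-a, 1:] * f) - nsq M ([:-1, cnj a:] * f)
     = (\<Sum>k\<le>M. ((cmod a)\<^sup>2 - 1) * ((cmod (coeff f k))\<^sup>2 - (cmod (coeff (pCons 0 f) k))\<^sup>2))"
    unfolding nsq_def c1 c2 sum_subtractf[symmetric] by (rule sum.cong[OF refl], rule cmod_sq_identity)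
  also have "\<dots> = ((cmod a)\<^sup>2 - 1) * (nsq M f - nsq M (pCons 0 f))"
    unfolding nsq_def by (simp only: sum_distrib_left sum_subtractf right_diff_distrib)
  also have "\<dots> = 0" using nsq_pCons0[OF assms] by simp
  finally show ?thesis by simp
qed

definition hfac :: "complex \<Rightarrow> complex poly" where
  "hfac z = (if 1 < cmod z then [:-1, cnj z:] else [:-z, 1:])"

lemma degree_hfac: "degree (hfac z) \<le> 1"
  unfolding hfac_def by auto

lemma lead_hfac: "cmod (lead_coeff (hfac z)) = max 1 (cmod z)"
  unfolding hfac_def by auto

lemma degree_prod_hfac: "degree (\<Prod>z\<in>#zs. hfac z) \<le> size zs"
proof (induction zs)
  case empty then show ?case by simp
next
  case (add x zs)
  have "degree (\<Prod>z\<in>#add_mset x zs. hfac z) = degree (hfac x * (\<Prod>z\<in>#zs. hfac z))" by simp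
  also have "\<dots> \<le> degree (hfac x) + degree (\<Prod>z\<in>#zs. hfac z)" by (rule degree_mult_le)
  also have "\<dots> \<le> 1 + size zs" using add degree_hfac[of x] by linarith
  finally show ?case by simp
qed

lemma degree_prod_lin: "degree (\<Prod>z\<in>#zs. [:-z, 1:]) \<le> size zs"
proof (induction zs)
  case empty then show ?case by simp
next
  case (add x zs)
  have "degree (\<Prod>z\<in>#add_mset x zs. [:-z, 1:]) = degree ([:-x, 1:] * (\<Prod>z\<in>#zs. [:-z, 1:]))" by simp
  also have "\<dots> \<le> degree [:-x, 1:] + degree (\<Prod>z\<in>#zs. [:-z, 1:])" by (rule degree_mult_le)
  also have "\<dots> \<le> 1 + size zs" using add by simp
  finally show ?case by simp
qed

lemma nsq_prod_swap:
  assumes "degree f + size zs \<le> M"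
  shows "nsq M (f * (\<Prod>z\<in>#zs. [:-z, 1:])) = nsq M (f * (\<Prod>z\<in>#zs. hfac z))"
  using assms
proof (induction zs arbitrary: f)
  case empty then show ?case by simp
next
  case (add a zs)
  let ?P = "\<Prod>z\<in>#zs. [:-z, 1:]" and ?Q = "\<Prod>z\<in>#zs. hfac z"
  have dg: "degree (f * [:-a, 1:]) + size zs \<le> M"
    using add.prems degree_mult_le[of f "[:-a,1:]"] by simp
  have "nsq M (f * (\<Prod>z\<in>#add_mset a zs. [:-z, 1:])) = nsq M ((f * [:-a, 1:]) * ?P)"
    by (simp only: prod_mset.add_mset image_mset_add_mset mult.assoc)
  also have "\<dots> = nsq M ((f * [:-a, 1:]) * ?Q)" by (rule add.IH[OF dg])
  also have "\<dots> = nsq M ([:-a, 1:] * (f * ?Q))" by (simp only: ac_simps)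
  also have "\<dots> = nsq M (hfac a * (f * ?Q))"
  proof (cases "1 < cmod a")
    case True
    have "degree (f * ?Q) \<le> degree f + degree ?Q" by (rule degree_mult_le)
    also have "\<dots> \<le> degree f + size zs" using degree_prod_hfac[of zs] by simp
    finally have "degree (f * ?Q) < M" using add.prems by simp
    then show ?thesis using True nsq_swap[of "f * ?Q" M a] by (simp only: hfac_def if_True)
  next
    case False then show ?thesis by (simp add: hfac_def)
  qed
  also have "\<dots> = nsq M (f * (\<Prod>z\<in>#add_mset a zs. hfac z))" by (simp only: prod_mset.add_mset image_mset_add_mset ac_simps)
  finally show ?case .
qed

lemma lead_le_nsq:
  assumes "degree q \<le> M"
  shows "(cmod (lead_coeff q))\<^sup>2 \<le> nsq M q"
  unfolding nsq_def using assms by (intro member_le_sum) auto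

lemma nsq_le_L1sq:
  "nsq M q \<le> (\<Sum>k\<le>M. cmod (coeff q k))\<^sup>2"
proof -
  let ?S = "\<Sum>k\<le>M. cmod (coeff q k)"
  have "nsq M q \<le> (\<Sum>k\<le>M. cmod (coeff q k) * ?S)"
    unfolding nsq_def power2_eq_square
    by (intro sum_mono mult_left_mono member_le_sum) auto
  also have "\<dots> = ?S\<^sup>2" by (simp add: power2_eq_square sum_distrib_right)
  finally show ?thesis .
qed

lemma cmod_prod_mset: "cmod (\<Prod>z\<in>#zs. f z) = (\<Prod>z\<in>#zs. cmod (f z))"
  by (induction zs) (simp_all add: norm_mult)

lemma lead_prod_hfac: "cmod (lead_coeff (\<Prod>z\<in>#zs. hfac z)) = (\<Prod>z\<in>#zs. max 1 (cmod z))"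
  by (induction zs) (simp_all add: lead_coeff_mult norm_mult lead_hfac)

theorem mahler:
  fixes p :: "complex poly"
  assumes "p \<noteq> 0"
  shows "cmod (lead_coeff p) * (\<Prod>z\<in>#proots p. max 1 (cmod z)) \<le> (\<Sum>k\<le>degree p. cmod (coeff p k))"
proof -
  let ?c = "lead_coeff p" and ?R = "proots p" and ?M = "degree p"
  let ?q = "[:?c:] * (\<Prod>z\<in>#?R. hfac z)"
  have pe: "p = [:?c:] * (\<Prod>z\<in>#?R. [:-z, 1:])"
    using complex_poly_decompose_multiset[of p] by simp
  have "nsq ?M p = nsq ?M ?q"
    by (subst pe, rule nsq_prod_swap) (simp add: size_proots_complex)
  have dq: "degree ?q \<le> ?M"
    using degree_prod_hfac[of ?R] by (simp add: size_proots_complex)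
  have "(cmod (lead_coeff ?q))\<^sup>2 \<le> nsq ?M ?q" by (rule lead_le_nsq[OF dq])
  also have "\<dots> = nsq ?M p" using \<open>nsq ?M p = nsq ?M ?q\<close> by simp
  also have "\<dots> \<le> (\<Sum>k\<le>?M. cmod (coeff p k))\<^sup>2" by (rule nsq_le_L1sq)
  finally have "cmod (lead_coeff ?q) \<le> (\<Sum>k\<le>?M. cmod (coeff p k))"
    by (rule power2_le_imp_le) (simp add: sum_nonneg)
  moreover have "cmod (lead_coeff ?q) = cmod ?c * (\<Prod>z\<in>#?R. max 1 (cmod z))"
    by (simp add: lead_coeff_mult norm_mult lead_prod_hfac)
  ultimately show ?thesis by simp
qed



lemma saw_len:
  assumes "w \<in> saw d n" "i \<le> n"
  shows "length (w ! i) = d"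
proof (cases i)
  case 0 then show ?thesis using assms by (simp add: saw_def origin_def)
next
  case (Suc j)
  then have "lattice_adj d (w ! j) (w ! Suc j)" using assms by (simp add: saw_def)
  then show ?thesis using Suc by (simp add: lattice_adj_def)
qed

lemma saw_l1:
  assumes "w \<in> saw d n" "i \<le> n"
  shows "(\<Sum>j<d. \<bar>w ! i ! j\<bar>) \<le> int i"
  using assms(2)
proof (induction i)
  case 0
  then show ?case using assms(1) by (simp add: saw_def origin_def)
next
  case (Suc i)
  have adj: "lattice_adj d (w ! i) (w ! Suc i)" using assms(1) Suc.prems by (simp add: saw_def)
  then have s1: "(\<Sum>j<d. \<bar>w ! i ! j - w ! Suc i ! j\<bar>) = 1" by (simp add: lattice_adj_def)
  have "(\<Sum>j<d. \<bar>w ! Suc i ! j\<bar>) \<le> (\<Sum>j<d. \<bar>w ! i ! j\<bar> + \<bar>w ! i ! j - w ! Suc i ! j\<bar>)"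
    by (intro sum_mono) linarith
  also have "\<dots> = (\<Sum>j<d. \<bar>w ! i ! j\<bar>) + 1" using s1 by (simp add: sum.distrib)
  also have "\<dots> \<le> int (Suc i)" using Suc by simp
  finally show ?case .
qed

lemma finite_saw: "finite (saw d n)"
proof -
  define B where "B = {x :: int list. set x \<subseteq> {- int n..int n} \<and> length x = d}"
  have fB: "finite B" unfolding B_def by (intro finite_lists_length_eq) auto
  have "saw d n \<subseteq> {w. set w \<subseteq> B \<and> length w = Suc n}"
  proof safe
    fix w assume w: "w \<in> saw d n"
    then show "length w = Suc n" by (simp add: saw_def)
    fix v assume "v \<in> set w"
    then obtain i where i: "i < Suc n" "v = w ! i" using \<open>length w = Suc n\<close> by (auto simp: in_set_conv_nth)
    have len: "length v = d" using saw_len[OF w] i by simp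
    have "set v \<subseteq> {- int n..int n}"
    proof
      fix e assume "e \<in> set v"
      then obtain j where j: "j < d" "e = v ! j" using len by (auto simp: in_set_conv_nth)
      have "\<bar>w ! i ! j\<bar> \<le> (\<Sum>j<d. \<bar>w ! i ! j\<bar>)" by (rule member_le_sum) (use j in auto)
      then have "\<bar>e\<bar> \<le> (\<Sum>j<d. \<bar>w ! i ! j\<bar>)" using j i by simp
      also have "\<dots> \<le> int i" using saw_l1[OF w] i by simp
      finally show "e \<in> {- int n..int n}" using i by auto
    qed
    then show "v \<in> B" using len by (simp add: B_def)
  qed
  moreover have "finite {w. set w \<subseteq> B \<and> length w = Suc n}"
    using fB by (rule finite_lists_length_eq)
  ultimately show ?thesis by (rule finite_subset)
qed

lemma sawD:
  assumes "w \<in> saw d n"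
  shows "length w = Suc n" "w ! 0 = origin d" "distinct w" "\<And>i. i < n \<Longrightarrow> lattice_adj d (w ! i) (w ! Suc i)"
  using assms unfolding saw_def by simp_all

lemma saw_set_len:
  assumes "w \<in> saw d n" "v \<in> set w"
  shows "length v = d"
proof -
  have "length w = Suc n" using assms by (simp add: saw_def)
  then obtain i where "i < Suc n" "v = w ! i" using assms(2) by (auto simp: in_set_conv_nth)
  then show ?thesis using saw_len[OF assms(1), of i] by simp
qed

lemma straight_in_saw:
  assumes "d \<ge> 1"
  shows "map (\<lambda>i. int i # replicate (d-1) 0) [0..<Suc n] \<in> saw d n"
proof -
  obtain k where d: "d = Suc k" using assms by (cases d) auto
  have adj: "lattice_adj d (int i # replicate k 0) (int (Suc i) # replicate k 0)" for i
  proof -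
    have "(\<Sum>j<Suc k. \<bar>(int i # replicate k 0) ! j - (int (Suc i) # replicate k 0) ! j\<bar>)
        = \<bar>int i - int (Suc i)\<bar> + (\<Sum>j<k. \<bar>replicate k 0 ! j - replicate k (0::int) ! j\<bar>)"
      by (subst sum.lessThan_Suc_shift) simp
    also have "\<dots> = 1" by simp
    finally show ?thesis unfolding lattice_adj_def d by simp
  qed
  have inj: "inj (\<lambda>i. int i # replicate k (0::int))" by (rule injI) simp
  let ?w = "map (\<lambda>i. int i # replicate k 0) [0..<Suc n]"
  have "length ?w = Suc n" by simp
  moreover have "?w ! 0 = origin d" by (simp add: d origin_def del: upt_Suc)
  moreover have "distinct ?w" using inj by (simp add: distinct_map inj_on_def del: upt_Suc)
  moreover have "lattice_adj d (?w ! i) (?w ! Suc i)" if "i < n" for i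
    using adj[of i] that by (simp del: upt_Suc)
  ultimately show ?thesis unfolding saw_def d by simp
qed

lemma card_saw_ge1: "d \<ge> 1 \<Longrightarrow> card (saw d n) \<ge> 1"
  using straight_in_saw[of d n] finite_saw[of d n]
  by (metis One_nat_def Suc_leI card_gt_0_iff empty_iff)

definition vsub :: "int list \<Rightarrow> int list \<Rightarrow> int list" where
  "vsub x c = map (\<lambda>i. x ! i - c ! i) [0..<length x]"

lemma vsub_len [simp]: "length (vsub x c) = length x"
  by (simp add: vsub_def)

lemma vsub_nth [simp]: "j < length x \<Longrightarrow> vsub x c ! j = x ! j - c ! j"
  by (simp add: vsub_def)

lemma vsub_inj:
  assumes "length v = length v'" "vsub v c = vsub v' c"
  shows "v = v'"
proof (rule nth_equalityI)
  show "length v = length v'" by fact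
  fix j assume "j < length v"
  then have "vsub v c ! j = vsub v' c ! j" using assms by simp
  then show "v ! j = v' ! j" using \<open>j < length v\<close> assms(1) by simp
qed

lemma vsub_self: "vsub x x = replicate (length x) 0"
  by (simp add: vsub_def map_replicate_const)

lemma adj_vsub:
  assumes "lattice_adj d x y"
  shows "lattice_adj d (vsub x c) (vsub y c)"
proof -
  have "(\<Sum>j<d. \<bar>vsub x c ! j - vsub y c ! j\<bar>) = (\<Sum>j<d. \<bar>x ! j - y ! j\<bar>)"
    using assms by (intro sum.cong) (auto simp: lattice_adj_def)
  then show ?thesis using assms by (simp add: lattice_adj_def)
qed

lemma submult: "card (saw d (m + n)) \<le> card (saw d m) * card (saw d n)"
proof -
  define F where "F w = (take (Suc m) w, map (\<lambda>v. vsub v (w ! m)) (drop m w))" for w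
  have maps: "F w \<in> saw d m \<times> saw d n" if w: "w \<in> saw d (m+n)" for w
  proof -
    note lw = sawD(1)[OF w] and w0 = sawD(2)[OF w] and dw = sawD(3)[OF w] and aw = sawD(4)[OF w]
    have t1: "length (take (Suc m) w) = Suc m" using lw by simp
    have t2: "take (Suc m) w ! 0 = origin d" using w0 by simp
    have t3: "distinct (take (Suc m) w)" using dw by simp
    have t4: "\<forall>i<m. lattice_adj d (take (Suc m) w ! i) (take (Suc m) w ! Suc i)" using aw by simp
    have t: "take (Suc m) w \<in> saw d m"
      unfolding saw_def using t1 t2 t3 t4 by blast
    have lm: "length (w ! m) = d" using saw_len[OF w] by simp
    have ls: "\<And>v. v \<in> set (drop m w) \<Longrightarrow> length v = d"
      by (rule saw_set_len[OF w]) (erule in_set_dropD)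
    have injv: "inj_on (\<lambda>v. vsub v (w ! m)) (set (drop m w))"
    proof (rule inj_onI)
      fix v v' assume "v \<in> set (drop m w)" "v' \<in> set (drop m w)" "vsub v (w ! m) = vsub v' (w ! m)"
      then show "v = v'" using ls[of v] ls[of v'] vsub_inj[of v v'] by simp
    qed
    have "map (\<lambda>v. vsub v (w ! m)) (drop m w) \<in> saw d n"
      unfolding saw_def
    proof (intro CollectI conjI allI impI)
      show "length (map (\<lambda>v. vsub v (w ! m)) (drop m w)) = Suc n" using lw by simp
      show "map (\<lambda>v. vsub v (w ! m)) (drop m w) ! 0 = origin d"
        using lw lm by (simp add: vsub_self origin_def)
      show "distinct (map (\<lambda>v. vsub v (w ! m)) (drop m w))"
        using injv dw by (simp add: distinct_map)
      fix i assume "i < n"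
      then show "lattice_adj d (map (\<lambda>v. vsub v (w ! m)) (drop m w) ! i)
                   (map (\<lambda>v. vsub v (w ! m)) (drop m w) ! Suc i)"
        using lw aw[of "m+i"] by (simp add: adj_vsub)
    qed
    then show ?thesis using t by (simp add: F_def)
  qed
  have inj: "inj_on F (saw d (m+n))"
  proof (rule inj_onI)
    fix w w' assume w: "w \<in> saw d (m+n)" and w': "w' \<in> saw d (m+n)" and eq: "F w = F w'"
    have lw: "length w = Suc (m+n)" "length w' = Suc (m+n)" using sawD(1)[OF w] sawD(1)[OF w'] by simp_all
    have tk: "take (Suc m) w = take (Suc m) w'" using eq by (simp add: F_def)
    then have wm: "w ! m = w' ! m" using nth_take[of m "Suc m" w] nth_take[of m "Suc m" w'] by simp
    have lsd: "length v = d" if "v \<in> set (drop m w) \<union> set (drop m w')" for v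
    proof -
      from that have "v \<in> set w \<or> v \<in> set w'" by (auto dest: in_set_dropD)
      then show ?thesis using saw_set_len[OF w, of v] saw_set_len[OF w', of v] by auto
    qed
    have "inj_on (\<lambda>v. vsub v (w ! m)) (set (drop m w) \<union> set (drop m w'))"
    proof (rule inj_onI)
      fix v v' assume "v \<in> set (drop m w) \<union> set (drop m w')" "v' \<in> set (drop m w) \<union> set (drop m w')"
        "vsub v (w ! m) = vsub v' (w ! m)"
      then show "v = v'" using lsd[of v] lsd[of v'] vsub_inj[of v v'] by simp
    qed
    moreover have "map (\<lambda>v. vsub v (w ! m)) (drop m w) = map (\<lambda>v. vsub v (w ! m)) (drop m w')"
      using eq wm by (simp add: F_def)
    ultimately have dd: "drop m w = drop m w'" by (simp add: inj_on_map_eq_map)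
    have tt: "take m w = take m w'" using arg_cong[OF tk, of "take m"] by simp
    have "w = take m w @ drop m w" by (rule append_take_drop_id[symmetric])
    also have "\<dots> = take m w' @ drop m w'" by (simp only: tt dd)
    also have "\<dots> = w'" by (rule append_take_drop_id)
    finally show "w = w'" .
  qed
  have sub: "F ` saw d (m+n) \<subseteq> saw d m \<times> saw d n" using maps by blast
  have "card (saw d (m+n)) \<le> card (saw d m \<times> saw d n)"
    by (rule card_inj_on_le[OF inj sub finite_cartesian_product[OF finite_saw finite_saw]])
  also have "\<dots> = card (saw d m) * card (saw d n)" by (rule card_cartesian_product)
  finally show ?thesis .
qed



lemma adj_snoc0:
  assumes "lattice_adj k x y"
  shows "lattice_adj (Suc k) (x @ [0]) (y @ [0])"
proof -
  have lx: "length x = k" "length y = k" using assms by (auto simp: lattice_adj_def)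
  have "(\<Sum>j<Suc k. \<bar>(x @ [0]) ! j - (y @ [0]) ! j\<bar>)
      = (\<Sum>j<k. \<bar>(x @ [0]) ! j - (y @ [0]) ! j\<bar>) + \<bar>(x @ [0]) ! k - (y @ [0]) ! k\<bar>"
    by (rule sum.lessThan_Suc)
  also have "(\<Sum>j<k. \<bar>(x @ [0]) ! j - (y @ [0]) ! j\<bar>) = (\<Sum>j<k. \<bar>x ! j - y ! j\<bar>)"
    using lx by (intro sum.cong) (auto simp: nth_append)
  also have "\<dots> = 1" using assms by (simp add: lattice_adj_def)
  finally show ?thesis using lx by (simp add: lattice_adj_def nth_append)
qed

lemma pos_walk_sub: "pos_walk d n \<subseteq> saw d n"
  unfolding pos_walk_def by blast

lemma embed_le:
  assumes "d \<ge> 2"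
  shows "card (saw (d-1) N) \<le> cplus d N N"
proof -
  obtain k where d: "d = Suc k" and k: "k \<ge> 1" using assms by (cases d) auto
  define E where "E w = map (\<lambda>v. v @ [0::int]) w" for w
  have injA: "inj (\<lambda>v::int list. v @ [0])" by (simp add: inj_def)
  have injE: "inj E" unfolding E_def by (rule inj_mapI[OF injA])
  have maps: "E w \<in> {w \<in> pos_walk d N. visits d w = N}" if w: "w \<in> saw k N" for w
  proof -
    note lw = sawD(1)[OF w] and w0 = sawD(2)[OF w] and dw = sawD(3)[OF w] and aw = sawD(4)[OF w]
    have lE: "length (E w) = Suc N" using lw by (simp add: E_def)
    have Ei: "E w ! i = w ! i @ [0]" if "i \<le> N" for i using that lw by (simp add: E_def)
    have dE: "distinct (E w)" unfolding E_def distinct_map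
      using dw inj_on_subset[OF injA subset_UNIV] by blast
    have E0: "E w ! 0 = origin d" using Ei[of 0] w0 by (simp add: origin_def d replicate_append_same)
    have Ea: "lattice_adj d (E w ! i) (E w ! Suc i)" if "i < N" for i
      using Ei[of i] Ei[of "Suc i"] that aw[OF that] adj_snoc0 by (simp add: d)
    have Es: "E w \<in> saw d N" unfolding saw_def mem_Collect_eq using lE E0 dE Ea by blast
    have last0: "E w ! i ! (d - 1) = 0" if "i \<le> N" for i
      using saw_len[OF w that] Ei[OF that] by (simp add: d nth_append)
    have pos: "E w \<in> pos_walk d N" unfolding pos_walk_def using Es last0 by simp
    have "{i. i < length (E w) \<and> E w ! i \<noteq> origin d \<and> E w ! i ! (d - 1) = 0} = {1..<Suc N}"
    proof (rule set_eqI)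
      fix i
      have "i < length (E w) \<and> E w ! i \<noteq> origin d \<and> E w ! i ! (d - 1) = 0 \<longleftrightarrow> (1 \<le> i \<and> i < Suc N)"
      proof
        assume "i < length (E w) \<and> E w ! i \<noteq> origin d \<and> E w ! i ! (d - 1) = 0"
        then show "1 \<le> i \<and> i < Suc N" using lE E0 by (cases i) auto
      next
        assume i: "1 \<le> i \<and> i < Suc N"
        have "E w ! i \<noteq> E w ! 0" using nth_eq_iff_index_eq[OF dE, of i 0] i lE by simp
        then show "i < length (E w) \<and> E w ! i \<noteq> origin d \<and> E w ! i ! (d - 1) = 0"
          using i lE E0 last0[of i] by simp
      qed
      then show "i \<in> {i. i < length (E w) \<and> E w ! i \<noteq> origin d \<and> E w ! i ! (d - 1) = 0} \<longleftrightarrow> i \<in> {1..<Suc N}"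
        by simp
    qed
    then have "visits d (E w) = N" unfolding visits_def by simp
    then show ?thesis using pos by simp
  qed
  have fin: "finite {w \<in> pos_walk d N. visits d w = N}"
    by (rule finite_subset[OF _ finite_saw[of d N]]) (use pos_walk_sub in blast)
  have sub: "E ` saw k N \<subseteq> {w \<in> pos_walk d N. visits d w = N}" using maps by blast
  have "card (saw k N) \<le> card {w \<in> pos_walk d N. visits d w = N}"
    by (rule card_inj_on_le[OF inj_on_subset[OF injE subset_UNIV] sub fin])
  then show ?thesis by (simp add: cplus_def d)
qed

lemma cplus_sum_le: "(\<Sum>k\<le>n. cplus d n k) \<le> card (saw d n)"
proof -
  have fin: "finite (pos_walk d n)"
    by (rule finite_subset[OF pos_walk_sub finite_saw])
  have "(\<Sum>k\<le>n. cplus d n k) = card (\<Union>k\<le>n. {w \<in> pos_walk d n. visits d w = k})"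
    unfolding cplus_def by (rule card_UN_disjoint[symmetric]) (use fin in auto)
  also have "\<dots> \<le> card (saw d n)"
    by (rule card_mono[OF finite_saw]) (use pos_walk_sub in blast)
  finally show ?thesis .
qed

lemma cplus00:
  assumes "d \<ge> 1"
  shows "cplus d 0 0 = 1"
proof -
  have "saw d 0 = {[origin d]}"
  proof (rule set_eqI, rule iffI)
    fix w assume w: "w \<in> saw d 0"
    have "length w = 1" "w ! 0 = origin d" using sawD[OF w] by simp_all
    then have "w = [origin d]" by (cases w) auto
    then show "w \<in> {[origin d]}" by simp
  next
    fix w assume "w \<in> {[origin d]}"
    then show "w \<in> saw d 0" by (simp add: saw_def)
  qed
  then have P0: "pos_walk d 0 = {w \<in> {[origin d]}. \<forall>i\<le>0. w ! i ! (d - 1) \<ge> 0}"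
    unfolding pos_walk_def by simp
  have o0: "origin d ! (d - 1) = 0" using assms by (simp add: origin_def)
  have "{w \<in> {[origin d]}. \<forall>i\<le>0. w ! i ! (d - 1) \<ge> 0} = {[origin d]}"
    using o0 by auto
  then have "pos_walk d 0 = {[origin d]}" using P0 by simp
  moreover have "visits d [origin d] = 0"
  proof -
    have "{i. i < length [origin d] \<and> [origin d] ! i \<noteq> origin d \<and> [origin d] ! i ! (d - 1) = 0} = {}"
      by auto
    then show ?thesis unfolding visits_def by simp
  qed
  ultimately have "{w \<in> pos_walk d 0. visits d w = 0} = {[origin d]}" by auto
  then show ?thesis by (simp add: cplus_def)
qed



lemma saw_growth:
  assumes k: "k \<ge> 1"
  shows "\<exists>\<mu>>0. (\<lambda>n. root n (real (card (saw k n)))) \<longlonglongrightarrow> \<mu> \<and>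
              (\<forall>n. \<mu> ^ n \<le> real (card (saw k n)))"
proof -
  define c where "c n = real (card (saw k n))" for n
  have c1: "c n \<ge> 1" for n using card_saw_ge1[OF k] by (simp add: c_def)
  define a where "a n = ln (c n)" for n
  have pos: "a n \<ge> 0" for n using c1[of n] by (simp add: a_def)
  have sub: "a (m+n) \<le> a m + a n" for m n
  proof -
    have "c (m+n) \<le> c m * c n" unfolding c_def using submult[of k m n]
      by (simp flip: of_nat_mult)
    then have "ln (c (m+n)) \<le> ln (c m * c n)" using c1[of "m+n"] by simp
    also have "\<dots> = ln (c m) + ln (c n)" using c1[of m] c1[of n] by (simp add: ln_mult)
    finally show ?thesis by (simp add: a_def)
  qed
  define L where "L = (INF n\<in>{1..}. a n / real n)"
  have lim: "(\<lambda>n. a n / real n) \<longlonglongrightarrow> L" unfolding L_def by (rule fekete[OF sub pos])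
  have bdd: "bdd_below ((\<lambda>n. a n / real n) ` {1..})"
    by (rule bdd_belowI[of _ 0]) (auto intro: divide_nonneg_nonneg pos)
  have low: "L \<le> a n / real n" if "n \<ge> 1" for n
    unfolding L_def using that bdd by (intro cINF_lower) auto
  have ev: "\<forall>\<^sub>F n in sequentially. exp (a n / real n) = root n (c n)"
  proof (rule eventually_sequentiallyI[of 1])
    fix n :: nat assume "n \<ge> 1"
    then show "exp (a n / real n) = root n (c n)"
      using c1[of n] by (simp add: a_def root_powr_inverse powr_def)
  qed
  have "(\<lambda>n. exp (a n / real n)) \<longlonglongrightarrow> exp L" by (intro tendsto_exp lim)
  then have T: "(\<lambda>n. root n (c n)) \<longlonglongrightarrow> exp L" by (rule Lim_transform_eventually[OF _ ev])
  have P: "exp L ^ n \<le> c n" for n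
  proof (cases "n = 0")
    case True then show ?thesis using c1[of 0] by simp
  next
    case False
    then have "real n * L \<le> a n" using low[of n] by (simp add: field_simps)
    then have "exp (real n * L) \<le> exp (a n)" by simp
    then show ?thesis using c1[of n] by (simp add: a_def exp_of_nat_mult)
  qed
  show ?thesis using T P by (intro exI[of _ "exp L"]) (simp add: c_def)
qed

lemma mu_props:
  assumes k: "k \<ge> 1"
  shows "mu k > 0" "\<And>n. mu k ^ n \<le> real (card (saw k n))"
    "k \<ge> 2 \<Longrightarrow> (\<lambda>n. root n (real (card (saw k n)))) \<longlonglongrightarrow> mu k"
proof -
  obtain \<mu> where mu0: "\<mu> > 0" and T: "(\<lambda>n. root n (real (card (saw k n)))) \<longlonglongrightarrow> \<mu>"
    and P: "\<And>n. \<mu> ^ n \<le> real (card (saw k n))"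
    using saw_growth[OF k] by blast
  have eq: "k \<ge> 2 \<Longrightarrow> mu k = \<mu>" unfolding mu_def using T limI by auto
  show "mu k > 0"
  proof (cases "k = 1")
    case True then show ?thesis by (simp add: mu_def)
  next
    case False then show ?thesis using mu0 eq k by simp
  qed
  show "mu k ^ n \<le> real (card (saw k n))" for n
  proof (cases "k = 1")
    case True then show ?thesis using card_saw_ge1[OF k, of n] by (simp add: mu_def)
  next
    case False then show ?thesis using eq P k by simp
  qed
  show "k \<ge> 2 \<Longrightarrow> (\<lambda>n. root n (real (card (saw k n)))) \<longlonglongrightarrow> mu k" using eq T by simp
qed

lemma summable_saw:
  assumes d: "d \<ge> 2" and t: "t > 0" "t < 1 / mu d"
  shows "summable (\<lambda>n. real (card (saw d n)) * t ^ n)"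
proof -
  have T: "(\<lambda>n. root n (real (card (saw d n)))) \<longlonglongrightarrow> mu d" using mu_props(3)[of d] d by simp
  have m0: "mu d > 0" using mu_props(1)[of d] d by simp
  have ev: "\<forall>\<^sub>F n in sequentially. root n (real (card (saw d n))) * t = root n (norm (real (card (saw d n)) * t ^ n))"
  proof (rule eventually_sequentiallyI[of 1])
    fix n :: nat assume n: "n \<ge> 1"
    have rt: "root n (t ^ n) = t" using n t by (intro real_root_power_cancel) auto
    show "root n (real (card (saw d n))) * t = root n (norm (real (card (saw d n)) * t ^ n))"
      using t rt by (simp add: real_root_mult abs_mult)
  qed
  have "(\<lambda>n. root n (real (card (saw d n))) * t) \<longlonglongrightarrow> mu d * t" by (intro tendsto_mult T tendsto_const)
  then have "(\<lambda>n. root n (norm (real (card (saw d n)) * t ^ n))) \<longlonglongrightarrow> mu d * t"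
    by (rule Lim_transform_eventually[OF _ ev])
  moreover have "mu d * t < 1" using t m0 by (simp add: field_simps)
  ultimately show ?thesis by (rule root_test_convergence)
qed




definition gco :: "nat \<Rightarrow> real \<Rightarrow> nat \<Rightarrow> nat \<Rightarrow> real" where
  "gco d t N k = (\<Sum>n\<le>N. t ^ n * (if k \<le> n then real (cplus d n k) else 0))"

lemma coeff_A: "coeff (A_poly d n) k = (if k \<le> n then of_nat (cplus d n k) else 0)"
  unfolding A_poly_def by (simp add: coeff_sum coeff_monom)

lemma coeff_G: "coeff (G_poly d t N) k = complex_of_real (gco d t N k)"
proof -
  have "coeff (G_poly d t N) k = (\<Sum>n\<le>N. complex_of_real (t ^ n) * coeff (A_poly d n) k)"
    by (simp add: G_poly_def coeff_sum)
  also have "\<dots> = complex_of_real (gco d t N k)"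
    unfolding gco_def of_real_sum by (intro sum.cong) (auto simp: coeff_A)
  finally show ?thesis .
qed

lemma gco_nonneg: "t > 0 \<Longrightarrow> gco d t N k \<ge> 0"
  unfolding gco_def by (intro sum_nonneg) auto

lemma gco_big: "k > N \<Longrightarrow> gco d t N k = 0"
  unfolding gco_def by (intro sum.neutral) auto

lemma gco_top: "gco d t N N = t ^ N * real (cplus d N N)"
proof -
  have "gco d t N N = (\<Sum>n\<in>{N}. t ^ n * (if N \<le> n then real (cplus d n N) else 0))"
    unfolding gco_def by (intro sum.mono_neutral_right) auto
  then show ?thesis by simp
qed

lemma gco_zero:
  assumes "t > 0" "cplus d 0 0 = 1"
  shows "gco d t N 0 \<ge> 1"
proof -
  have "t ^ 0 * (if 0 \<le> (0::nat) then real (cplus d 0 0) else 0)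
        \<le> (\<Sum>n\<le>N. t ^ n * (if 0 \<le> n then real (cplus d n 0) else 0))"
    by (rule member_le_sum) (use assms in auto)
  then show ?thesis using assms by (simp add: gco_def)
qed

lemma gco_sum:
  assumes "t > 0" "\<And>n. (\<Sum>k\<le>n. cplus d n k) \<le> card (saw d n)"
  shows "(\<Sum>k\<le>N. gco d t N k) \<le> (\<Sum>n\<le>N. real (card (saw d n)) * t ^ n)"
proof -
  have "(\<Sum>k\<le>N. gco d t N k) = (\<Sum>n\<le>N. t ^ n * (\<Sum>k\<le>N. if k \<le> n then real (cplus d n k) else 0))"
    unfolding gco_def by (subst sum.swap) (simp add: sum_distrib_left)
  also have "\<dots> = (\<Sum>n\<le>N. t ^ n * (\<Sum>k\<le>n. real (cplus d n k)))"
  proof (rule sum.cong[OF refl])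
    fix n assume "n \<in> {..N}"
    then have "{k\<in>{..N}. k \<le> n} = {..n}" by auto
    then have "(\<Sum>k\<le>N. if k \<le> n then real (cplus d n k) else 0) = (\<Sum>k\<le>n. real (cplus d n k))"
      by (simp flip: sum.inter_filter)
    then show "t ^ n * (\<Sum>k\<le>N. if k \<le> n then real (cplus d n k) else 0) = t ^ n * (\<Sum>k\<le>n. real (cplus d n k))"
      by simp
  qed
  also have "\<dots> \<le> (\<Sum>n\<le>N. real (card (saw d n)) * t ^ n)"
  proof (intro sum_mono)
    fix n
    have "(\<Sum>k\<le>n. real (cplus d n k)) \<le> real (card (saw d n))"
      using assms(2)[of n] by (simp flip: of_nat_sum)
    then show "t ^ n * (\<Sum>k\<le>n. real (cplus d n k)) \<le> real (card (saw d n)) * t ^ n"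
      using assms(1) by (simp add: mult.commute)
  qed
  finally show ?thesis .
qed

lemma nu_size:
  fixes p :: "complex poly"
  assumes "p \<noteq> 0"
  shows "(\<Sum>z\<in>{z. poly p z = 0 \<and> P z}. order z p) = size (filter_mset P (proots p))"
proof -
  have "size (filter_mset P (proots p)) = (\<Sum>z\<in>set_mset (filter_mset P (proots p)). count (filter_mset P (proots p)) z)"
    by (rule size_multiset_overloaded_eq)
  also have "set_mset (filter_mset P (proots p)) = {z. poly p z = 0 \<and> P z}" using assms by auto
  also have "(\<Sum>z\<in>{z. poly p z = 0 \<and> P z}. count (filter_mset P (proots p)) z) = (\<Sum>z\<in>{z. poly p z = 0 \<and> P z}. order z p)"
    using assms by (intro sum.cong) auto
  finally show ?thesis by simp
qed

lemma size_split3: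
  fixes r R :: real
  assumes "r < R"
  shows "size M = size (filter_mset (\<lambda>z. cmod z \<le> r) M) + size (filter_mset (\<lambda>z. r < cmod z \<and> cmod z < R) M)
               + size (filter_mset (\<lambda>z. R \<le> cmod z) M)"
  using assms by (induction M) auto

lemma prod_min_le:
  fixes r :: real
  assumes "0 \<le> r" "r \<le> 1"
  shows "(\<Prod>z\<in>#M. min 1 (cmod z)) \<le> r ^ size (filter_mset (\<lambda>z. cmod z \<le> r) M)"
proof (induction M)
  case empty then show ?case by simp
next
  case (add a M)
  have nn: "0 \<le> (\<Prod>z\<in>#M. min 1 (cmod z))" by (induction M) auto
  show ?case
  proof (cases "cmod a \<le> r")
    case True
    then have "min 1 (cmod a) * (\<Prod>z\<in>#M. min 1 (cmod z)) \<le> r * r ^ size (filter_mset (\<lambda>z. cmod z \<le> r) M)"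
      using add nn assms by (intro mult_mono) auto
    then show ?thesis using True by simp
  next
    case False
    then have "min 1 (cmod a) * (\<Prod>z\<in>#M. min 1 (cmod z)) \<le> 1 * r ^ size (filter_mset (\<lambda>z. cmod z \<le> r) M)"
      using add nn assms by (intro mult_mono) auto
    then show ?thesis using False by simp
  qed
qed

lemma prod_max_ge:
  fixes R :: real
  assumes "1 \<le> R"
  shows "R ^ size (filter_mset (\<lambda>z. R \<le> cmod z) M) \<le> (\<Prod>z\<in>#M. max 1 (cmod z))"
proof (induction M)
  case empty then show ?case by simp
next
  case (add a M)
  show ?case
  proof (cases "R \<le> cmod a")
    case True
    then have "R * R ^ size (filter_mset (\<lambda>z. R \<le> cmod z) M) \<le> max 1 (cmod a) * (\<Prod>z\<in>#M. max 1 (cmod z))"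
      using add assms by (intro mult_mono) auto
    then show ?thesis using True by simp
  next
    case False
    then have "1 * R ^ size (filter_mset (\<lambda>z. R \<le> cmod z) M) \<le> max 1 (cmod a) * (\<Prod>z\<in>#M. max 1 (cmod z))"
      using add assms by (intro mult_mono) auto
    then show ?thesis using False by simp
  qed
qed

lemma prod_split_maxmin: "(\<Prod>z\<in>#M. cmod z) = (\<Prod>z\<in>#M. max 1 (cmod z)) * (\<Prod>z\<in>#M. min 1 (cmod z))"
  by (induction M) (auto simp: max_def min_def)

lemma coeff0_roots:
  fixes p :: "complex poly"
  shows "cmod (coeff p 0) = cmod (lead_coeff p) * (\<Prod>z\<in>#proots p. cmod z)"
proof -
  have "coeff p 0 = poly p 0" by (simp add: poly_0_coeff_0)
  also have "\<dots> = poly (smult (lead_coeff p) (\<Prod>x\<in>#proots p. [:-x, 1:])) 0"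
    by (simp only: complex_poly_decompose_multiset)
  also have "\<dots> = lead_coeff p * (\<Prod>x\<in>#proots p. - x)"
    by (simp add: poly_prod_mset multiset.map_comp o_def)
  finally show ?thesis by (simp add: norm_mult cmod_prod_mset)
qed


lemma key:
  assumes d: "d \<ge> 2" and t: "t > 0" and m0: "mu (d-1) > 0"
    and mpow: "\<And>n. mu (d-1) ^ n \<le> real (card (saw (d-1) n))"
    and rho: "0 < \<rho>" "\<rho> < 1"
    and Sb: "(\<Sum>k\<le>N. gco d t N k) \<le> S"
  shows "real N * (1 - \<bar>ln (mu (d-1) * t)\<bar> / \<rho>) - 2 * ln S / \<rho> \<le> real (nu_open d t N \<rho>)"
    "nu_open d t N \<rho> \<le> nu d t N \<rho>" "nu d t N \<rho> \<le> N" "S \<ge> 1"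
proof -
  let ?p = "G_poly d t N"
  let ?m = "mu (d-1)"
  define r where "r = 1 - \<rho>"
  define R where "R = 1 / (1 - \<rho>)"
  have r: "0 < r" "r < 1" using rho by (auto simp: r_def)
  have R: "R = 1 / r" "1 < R" using rho by (auto simp: R_def r_def)
  have gN: "gco d t N N \<ge> (?m * t) ^ N"
  proof -
    have "(?m * t) ^ N = ?m ^ N * t ^ N" by (simp add: power_mult_distrib)
    also have "\<dots> \<le> real (cplus d N N) * t ^ N"
      using mpow[of N] embed_le[OF d, of N] t by (intro mult_right_mono) auto
    finally show ?thesis by (simp add: gco_top mult.commute)
  qed
  have "0 < (?m * t) ^ N" using m0 t by simp
  then have gNpos: "gco d t N N > 0" using gN by linarith
  have cN: "coeff ?p N \<noteq> 0" using gNpos by (simp add: coeff_G)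
  have dle: "degree ?p \<le> N" by (rule degree_le) (simp add: coeff_G gco_big)
  have deg: "degree ?p = N" using dle le_degree[OF cN] by simp
  have p0: "?p \<noteq> 0" using cN by auto
  have lc: "cmod (lead_coeff ?p) = gco d t N N" using deg gNpos by (simp add: coeff_G)
  have cm: "cmod (coeff ?p k) = gco d t N k" for k using gco_nonneg[OF t] by (simp add: coeff_G)
  have L1: "(\<Sum>k\<le>degree ?p. cmod (coeff ?p k)) \<le> S" using Sb deg cm by simp
  have a0: "cmod (coeff ?p 0) \<ge> 1" using gco_zero[OF t cplus00] d cm by simp
  define M where "M = proots ?p"
  define kA where "kA = size (filter_mset (\<lambda>z. cmod z \<le> r) M)"
  define kB where "kB = size (filter_mset (\<lambda>z. r < cmod z \<and> cmod z < R) M)"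
  define kC where "kC = size (filter_mset (\<lambda>z. R \<le> cmod z) M)"
  define Pmax where "Pmax = (\<Prod>z\<in>#M. max 1 (cmod z))"
  define Pmin where "Pmin = (\<Prod>z\<in>#M. min 1 (cmod z))"
  have "r < R" using r(2) R(2) by linarith
  then have "size M = kA + kB + kC"
    unfolding kA_def kB_def kC_def by (rule size_split3)
  moreover have "size M = N" unfolding M_def using size_proots_complex[of ?p] deg by simp
  ultimately have Nsum: "N = kA + kB + kC" by simp
  have mah: "gco d t N N * Pmax \<le> S" using mahler[OF p0] L1 lc unfolding Pmax_def M_def by simp
  have Pmax1: "Pmax \<ge> 1" unfolding Pmax_def using prod_max_ge[of 1 M] by simp
  have Pmin0: "Pmin \<ge> 0" unfolding Pmin_def by (induction M) auto
  have Pmin_le: "Pmin \<le> r ^ kA" unfolding Pmin_def kA_def using prod_min_le[of r M] r by simp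
  have Pmax_ge: "R ^ kC \<le> Pmax" unfolding Pmax_def kC_def using prod_max_ge[of R M] R by simp
  have a0eq: "cmod (coeff ?p 0) = gco d t N N * Pmax * Pmin"
    using coeff0_roots[of ?p] lc prod_split_maxmin[of M] unfolding Pmax_def Pmin_def M_def by simp
  have "0 \<le> gco d t N N * Pmax" using gNpos Pmax1 by simp
  then have S0: "0 \<le> S" using mah by linarith
  have S1: "1 \<le> S * r ^ kA"
  proof -
    have "1 \<le> gco d t N N * Pmax * Pmin" using a0 a0eq by simp
    also have "\<dots> \<le> S * r ^ kA" using mah Pmin_le Pmin0 gNpos Pmax1 S0
      by (intro mult_mono) auto
    finally show ?thesis .
  qed
  have rk: "0 < r ^ kA" "r ^ kA \<le> 1" using r by (simp_all add: power_le_one)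
  have Spos: "S > 0"
  proof (rule ccontr)
    assume "\<not> S > 0"
    then have "S * r ^ kA \<le> 0" using rk by (simp add: mult_nonpos_nonneg)
    then show False using S1 by linarith
  qed
  have "S * r ^ kA \<le> S * 1" using rk Spos by (intro mult_left_mono) auto
  then show Sge: "S \<ge> 1" using S1 by linarith
  have S2: "(?m * t) ^ N * R ^ kC \<le> S"
  proof -
    have "0 \<le> R ^ kC" using R(2) by simp
    then have "(?m * t) ^ N * R ^ kC \<le> gco d t N N * Pmax" using gN Pmax_ge gNpos
      by (intro mult_mono) auto
    then show ?thesis using mah by simp
  qed
  have lnr: "ln r \<le> - \<rho>" using ln_le_minus_one[of r] r by (simp add: r_def)
  have lnR: "ln R = - ln r" using R r by (simp add: ln_div)
  have E1: "0 \<le> ln S + real kA * ln r"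
  proof -
    have "ln 1 \<le> ln (S * r ^ kA)" using S1 by (subst ln_le_cancel_iff) auto
    then show ?thesis using Sge r by (simp add: ln_mult ln_realpow)
  qed
  have E2: "real N * ln (?m * t) + real kC * ln R \<le> ln S"
  proof -
    have pp: "0 < (?m * t) ^ N * R ^ kC" using m0 t R(2) by simp
    have "ln ((?m * t) ^ N * R ^ kC) \<le> ln S" using S2 pp Sge by (subst ln_le_cancel_iff) auto
    moreover have "ln ((?m * t) ^ N * R ^ kC) = ln ((?m * t) ^ N) + ln (R ^ kC)"
      using m0 t R(2) by (simp add: ln_mult)
    moreover have "ln ((?m * t) ^ N) = real N * ln (?m * t)" by (rule ln_realpow)
    moreover have "ln (R ^ kC) = real kC * ln R" by (rule ln_realpow)
    ultimately show ?thesis by linarith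
  qed
  have "real kA * \<rho> \<le> real kA * (- ln r)" using lnr by (intro mult_left_mono) auto
  then have A: "real kA * \<rho> \<le> ln S" using E1 by simp
  have C: "real kC * \<rho> \<le> ln S + real N * \<bar>ln (?m * t)\<bar>"
  proof -
    have "real kC * \<rho> \<le> real kC * ln R" using lnR lnr by (intro mult_left_mono) auto
    moreover have "real N * (- ln (?m * t)) \<le> real N * \<bar>ln (?m * t)\<bar>"
      by (intro mult_left_mono) auto
    ultimately show ?thesis using E2 by linarith
  qed
  have B: "real N * (1 - \<bar>ln (?m * t)\<bar> / \<rho>) - 2 * ln S / \<rho> \<le> real kB"
  proof -
    have "real kB * \<rho> = real N * \<rho> - real kA * \<rho> - real kC * \<rho>" using Nsum by (simp add: algebra_simps)
    then have "real N * \<rho> - 2 * ln S - real N * \<bar>ln (?m * t)\<bar> \<le> real kB * \<rho>" using A C by linarith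
    then have H: "(real N * \<rho> - 2 * ln S - real N * \<bar>ln (?m * t)\<bar>) / \<rho> \<le> (real kB * \<rho>) / \<rho>"
      using rho by (intro divide_right_mono) auto
    have "real N * (1 - \<bar>ln (?m * t)\<bar> / \<rho>) - 2 * ln S / \<rho>
        = (real N * \<rho> - 2 * ln S - real N * \<bar>ln (?m * t)\<bar>) / \<rho>"
      using rho by (simp add: field_simps)
    also have "\<dots> \<le> real kB" using H rho by simp
    finally show ?thesis .
  qed
  have nuo: "nu_open d t N \<rho> = kB"
    unfolding nu_open_def kB_def M_def using nu_size[OF p0] by (simp add: r_def R_def)
  show "real N * (1 - \<bar>ln (?m * t)\<bar> / \<rho>) - 2 * ln S / \<rho> \<le> real (nu_open d t N \<rho>)"
    using B nuo by simp
  have fin: "finite {z. poly ?p z = 0}" using p0 by (rule poly_roots_finite)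
  show "nu_open d t N \<rho> \<le> nu d t N \<rho>"
    unfolding nu_open_def nu_def by (rule sum_mono2) (auto intro: finite_subset[OF _ fin])
  have "nu d t N \<rho> = size (filter_mset (\<lambda>z. 1 - \<rho> \<le> cmod z \<and> cmod z \<le> 1 / (1 - \<rho>)) M)"
    unfolding nu_def M_def using nu_size[OF p0] by simp
  also have "\<dots> \<le> size M" by (rule size_filter_mset_lesseq)
  finally show "nu d t N \<rho> \<le> N" using size_proots_complex[of ?p] deg by (simp add: M_def)
qed


theorem theorem2p11:
  fixes d :: nat and t \<rho> :: real
  assumes "d \<ge> 2"
    and "1 / (exp 1 * mu (d - 1)) < t" and "t < 1 / mu d"
    and "\<bar>ln (mu (d - 1) * t)\<bar> < \<rho>" and "\<rho> < 1"
  shows "0 < 1 - \<bar>ln (mu (d - 1) * t)\<bar> / \<rho>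
       \<and> ereal (1 - \<bar>ln (mu (d - 1) * t)\<bar> / \<rho>)
           \<le> liminf (\<lambda>N. ereal (real (nu d t N \<rho>) / real N))
       \<and> liminf (\<lambda>N. ereal (real (nu d t N \<rho>) / real N))
           \<le> limsup (\<lambda>N. ereal (real (nu d t N \<rho>) / real N))
       \<and> limsup (\<lambda>N. ereal (real (nu d t N \<rho>) / real N)) \<le> 1
       \<and> 0 < liminf (\<lambda>N. ereal (real (nu_open d t N \<rho>) / real N))"
proof -
  note d = assms(1)
  define \<xi> where "\<xi> = \<bar>ln (mu (d - 1) * t)\<bar>"
  have d1: "d - 1 \<ge> 1" using d by simp
  have m0: "mu (d-1) > 0" using mu_props(1)[OF d1] .
  have "0 < 1 / (exp 1 * mu (d - 1))" using m0 by simp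
  then have t0: "t > 0" using assms(2) by linarith
  have xi0: "\<xi> \<ge> 0" unfolding \<xi>_def by simp
  have rho0: "\<rho> > 0" using assms(4) xi0 unfolding \<xi>_def by linarith
  have summ: "summable (\<lambda>n. real (card (saw d n)) * t ^ n)" using summable_saw[OF d t0 assms(3)] .
  define S where "S = suminf (\<lambda>n. real (card (saw d n)) * t ^ n)"
  have Sb: "(\<Sum>k\<le>N. gco d t N k) \<le> S" for N
  proof -
    have "(\<Sum>k\<le>N. gco d t N k) \<le> (\<Sum>n\<le>N. real (card (saw d n)) * t ^ n)"
      by (rule gco_sum[OF t0 cplus_sum_le])
    also have "\<dots> \<le> S" unfolding S_def
      by (rule sum_le_suminf[OF summ]) (use t0 in auto)
    finally show ?thesis .
  qed
  note K = key[OF d t0 m0 mu_props(2)[OF d1] rho0 assms(5) Sb]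
  define c where "c = 1 - \<xi> / \<rho>"
  define C where "C = 2 * ln S / \<rho>"
  have c0: "0 < c" unfolding c_def using assms(4) rho0 unfolding \<xi>_def by (simp add: field_simps)
  have lowN: "c - C / real N \<le> real (nu_open d t N \<rho>) / real N" if "N \<ge> 1" for N
  proof -
    have "real N * c - C \<le> real (nu_open d t N \<rho>)" using K(1)[of N] unfolding c_def C_def \<xi>_def by simp
    then have "(real N * c - C) / real N \<le> real (nu_open d t N \<rho>) / real N"
      by (intro divide_right_mono) auto
    moreover have "c - C / real N = (real N * c - C) / real N" using that by (simp add: field_simps)
    ultimately show ?thesis by simp
  qed
  have lim: "(\<lambda>N. ereal (c - C / real N)) \<longlonglongrightarrow> ereal c"
    by (intro tendsto_ereal tendsto_eq_intros lim_const_over_n) auto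
  have "ereal c = liminf (\<lambda>N. ereal (c - C / real N))"
    by (rule lim_imp_Liminf[symmetric]) (use lim in auto)
  also have "\<dots> \<le> liminf (\<lambda>N. ereal (real (nu_open d t N \<rho>) / real N))"
    by (rule Liminf_mono) (use lowN in \<open>auto intro: eventually_sequentiallyI[of 1]\<close>)
  finally have L1: "ereal c \<le> liminf (\<lambda>N. ereal (real (nu_open d t N \<rho>) / real N))" .
  have L2: "liminf (\<lambda>N. ereal (real (nu_open d t N \<rho>) / real N)) \<le> liminf (\<lambda>N. ereal (real (nu d t N \<rho>) / real N))"
    by (rule Liminf_mono) (use K(2) in \<open>auto intro!: always_eventually divide_right_mono\<close>)
  have L3: "liminf (\<lambda>N. ereal (real (nu d t N \<rho>) / real N)) \<le> limsup (\<lambda>N. ereal (real (nu d t N \<rho>) / real N))"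
    by (rule Liminf_le_Limsup) simp
  have L4: "limsup (\<lambda>N. ereal (real (nu d t N \<rho>) / real N)) \<le> 1"
  proof (rule Limsup_bounded, rule always_eventually, rule allI)
    fix N
    show "ereal (real (nu d t N \<rho>) / real N) \<le> 1"
    proof (cases "N = 0")
      case True then show ?thesis by simp
    next
      case False then show ?thesis using K(3)[of N] by (simp add: divide_simps)
    qed
  qed
  have L5: "0 < liminf (\<lambda>N. ereal (real (nu_open d t N \<rho>) / real N))"
    using L1 c0 by (meson ereal_less(2) less_le_trans)
  show ?thesis using c0 L1 L2 L3 L4 L5 unfolding c_def \<xi>_def by (meson order_trans)
qed


end
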